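(* Let $T$ be a key with at most $n$ rows. Then $\mathrm{cap}_n(T)$ is also a key. Moreover, if $T'$ is another key of the same shape, then $\mathrm{cap}_n(T)\ge T'$ (entrywise) if and only if $T\ge T'$ (entrywise) and $\max(T')\le n$.
   Context: Tableaux are drawn in English convention with positive integer entries; $T_c$ denotes the set of entries of column $c$. A key is a tableau whose columns are strictly increasing top to bottom and satisfy $T_1\supseteq T_2\supseteq\cdots$. For a key $T$ with at most $n$ rows, $\mathrm{cap}_n(T)$ is obtained by replacing, in each column, the entries larger than $n$ by the largest integers in $[n]$ that are missing from that column, and then sorting each column increasingly. Inequalities between tableaux of the same shape are entrywise (cell by cell). *)

theory Defs
  imports Main
begin

text \<open>A tableau is represented as the list of its columns (left to right); each column is
  the list of its entries read top to bottom. Entries are positive naturals.\<close>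

type_synonym tableau = "nat list list"

definition shape :: "tableau \<Rightarrow> nat list" where
  "shape T = map length T"

definition is_tableau :: "tableau \<Rightarrow> bool" where
  "is_tableau T \<longleftrightarrow> (\<forall>c \<in> set T. c \<noteq> [] \<and> (\<forall>x \<in> set c. 0 < x))
     \<and> sorted_wrt (\<ge>) (shape T)"

definition is_key :: "tableau \<Rightarrow> bool" where
  "is_key T \<longleftrightarrow> is_tableau T
     \<and> (\<forall>c \<in> set T. sorted_wrt (<) c)
     \<and> (\<forall>i. Suc i < length T \<longrightarrow> set (T ! Suc i) \<subseteq> set (T ! i))"

definition num_rows :: "tableau \<Rightarrow> nat" where
  "num_rows T = (if T = [] then 0 else length (hd T))"

definition largest :: "nat \<Rightarrow> nat set \<Rightarrow> nat set" where
  "largest k S = {x \<in> S. card {y \<in> S. x < y} < k}"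

text \<open>cap_n on one column: replace entries > n by the largest integers of [n]
  missing from the column, then sort increasingly.\<close>
definition cap_col :: "nat \<Rightarrow> nat list \<Rightarrow> nat list" where
  "cap_col n c = sorted_list_of_set
     ({x \<in> set c. x \<le> n} \<union> largest (card {x \<in> set c. n < x}) ({1..n} - set c))"

definition cap :: "nat \<Rightarrow> tableau \<Rightarrow> tableau" where
  "cap n T = map (cap_col n) T"

definition tab_le :: "tableau \<Rightarrow> tableau \<Rightarrow> bool" where
  "tab_le A B \<longleftrightarrow> shape A = shape B
     \<and> (\<forall>i < length A. \<forall>j < length (A ! i). A ! i ! j \<le> B ! i ! j)"

definition max_entry_le :: "tableau \<Rightarrow> nat \<Rightarrow> bool" where
  "max_entry_le T n \<longleftrightarrow> (\<forall>c \<in> set T. \<forall>x \<in> set c. x \<le> n)"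

end

theory Submission
  imports Defs
begin

lemma below_iff:
  fixes b :: "nat list"
  assumes s: "sorted_wrt (<) b" and j: "j < length b"
  shows "(v \<le> b ! j) \<longleftrightarrow> card {x \<in> set b. x < v} \<le> j"
proof -
  have d: "distinct b" using s strict_sorted_iff by blast
  have eq: "{x \<in> set b. x < v} = (!) b ` {i. i < length b \<and> b ! i < v}"
    by (auto simp: in_set_conv_nth)
  have inj: "inj_on ((!) b) {i. i < length b \<and> b ! i < v}"
    using d by (auto simp: inj_on_def nth_eq_iff_index_eq)
  have c: "card {x \<in> set b. x < v} = card {i. i < length b \<and> b ! i < v}"
    unfolding eq using inj card_image by blast
  show ?thesis
  proof
    assume "v \<le> b ! j"
    have "{i. i < length b \<and> b ! i < v} \<subseteq> {..<j}"
    proof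
      fix i assume "i \<in> {i. i < length b \<and> b ! i < v}"
      then have "i < length b" "b ! i < v" by auto
      show "i \<in> {..<j}"
      proof (rule ccontr)
        assume "i \<notin> {..<j}"
        then have "j \<le> i" by auto
        then have "b ! j \<le> b ! i"
          using s \<open>i < length b\<close> sorted_wrt_nth_less[OF s, of j i] by (cases "j = i") auto
        then show False using \<open>v \<le> b ! j\<close> \<open>b ! i < v\<close> by auto
      qed
    qed
    then have "card {i. i < length b \<and> b ! i < v} \<le> card {..<j}" by (intro card_mono) auto
    then show "card {x \<in> set b. x < v} \<le> j" using c by simp
  next
    assume a: "card {x \<in> set b. x < v} \<le> j"
    show "v \<le> b ! j"
    proof (rule ccontr)
      assume "\<not> v \<le> b ! j"
      have "{..j} \<subseteq> {i. i < length b \<and> b ! i < v}"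
      proof
        fix i assume "i \<in> {..j}"
        then have "i \<le> j" by auto
        then have "b ! i \<le> b ! j"
          using j sorted_wrt_nth_less[OF s, of i j] by (cases "i = j") auto
        then show "i \<in> {i. i < length b \<and> b ! i < v}" using \<open>i \<le> j\<close> j \<open>\<not> v \<le> b ! j\<close> by auto
      qed
      then have "card {..j} \<le> card {i. i < length b \<and> b ! i < v}" by (intro card_mono) auto
      then show False using a c by simp
    qed
  qed
qed

lemma sorted_gap:
  fixes xs :: "nat list"
  assumes s: "sorted_wrt (<) xs" and "i \<le> j" and "j < length xs"
  shows "xs ! i + (j - i) \<le> xs ! j"
  using assms(2,3)
proof (induction j)
  case 0 then show ?case by simp
next
  case (Suc j)
  show ?case
  proof (cases "i = Suc j")
    case True then show ?thesis by simp
  next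
    case False
    then have "i \<le> j" using Suc by simp
    then have "xs ! i + (j - i) \<le> xs ! j" using Suc by simp
    moreover have "xs ! j < xs ! Suc j" using sorted_wrt_nth_less[OF s, of j "Suc j"] Suc by simp
    ultimately show ?thesis using \<open>i \<le> j\<close> by simp
  qed
qed

lemma largest_card:
  fixes M :: "nat set"
  assumes fin: "finite M" and k: "k \<le> card M"
  shows "card (largest k M) = k"
proof -
  define f where "f x = card {y \<in> M. x < y}" for x
  have lt: "f y < f x" if "x \<in> M" "y \<in> M" "x < y" for x y
  proof -
    have "{z \<in> M. y < z} \<subset> {z \<in> M. x < z}" using that by auto
    then show ?thesis unfolding f_def using fin by (intro psubset_card_mono) auto
  qed
  have inj: "inj_on f M"
  proof (rule inj_onI)
    fix x y assume "x \<in> M" "y \<in> M" "f x = f y"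
    then show "x = y" using lt[of x y] lt[of y x] by (cases x y rule: linorder_cases) auto
  qed
  have sub: "f ` M \<subseteq> {..<card M}"
  proof
    fix t assume "t \<in> f ` M"
    then obtain x where x: "x \<in> M" "t = f x" by auto
    have "{y \<in> M. x < y} \<subset> M" using x by auto
    then have "f x < card M" unfolding f_def using fin by (intro psubset_card_mono) auto
    then show "t \<in> {..<card M}" using x by simp
  qed
  have img: "f ` M = {..<card M}"
    using sub by (intro card_subset_eq) (auto simp: card_image[OF inj])
  have L: "largest k M = {x \<in> M. f x < k}" unfolding largest_def f_def by simp
  have "f ` {x \<in> M. f x < k} = {..<k}"
  proof
    show "f ` {x \<in> M. f x < k} \<subseteq> {..<k}" by auto
    show "{..<k} \<subseteq> f ` {x \<in> M. f x < k}"
    proof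
      fix t assume "t \<in> {..<k}"
      then have "t \<in> f ` M" using img k by auto
      then show "t \<in> f ` {x \<in> M. f x < k}" using \<open>t \<in> {..<k}\<close> by auto
    qed
  qed
  moreover have "inj_on f {x \<in> M. f x < k}" using inj by (rule inj_on_subset) auto
  ultimately have "card {x \<in> M. f x < k} = card {..<k}" by (metis card_image)
  then show ?thesis using L by simp
qed


lemma col_basic:
  fixes c :: "nat list"
  assumes s: "sorted_wrt (<) c" and pos: "\<forall>x \<in> set c. 0 < x" and m: "length c \<le> n"
  defines "A \<equiv> {x \<in> set c. x \<le> n}" and "k \<equiv> card {x \<in> set c. n < x}"
    and "M \<equiv> {1..n} - set c"
  shows "k \<le> card M" and "card A + k = length c" and "card M = n - card A"
    and "card (largest k M) = k" and "largest k M \<subseteq> M" and "A \<subseteq> {1..n}"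
    and "set (cap_col n c) = A \<union> largest k M" and "A \<inter> largest k M = {}"
    and "length (cap_col n c) = length c" and "sorted_wrt (<) (cap_col n c)"
    and "set (cap_col n c) \<subseteq> {1..n}"
proof -
  have d: "distinct c" using s strict_sorted_iff by blast
  have C: "card (set c) = length c" using distinct_card[OF d] .
  have AK: "set c = A \<union> {x \<in> set c. n < x}" "A \<inter> {x \<in> set c. n < x} = {}"
    unfolding A_def by auto
  show ak: "card A + k = length c" unfolding k_def using AK C card_Un_disjoint
    by (metis List.finite_set finite_Un)
  show A1: "A \<subseteq> {1..n}" unfolding A_def using pos by auto
  have "M = {1..n} - A" unfolding M_def A_def using pos by auto
  then show cM: "card M = n - card A" using A1 by (simp add: card_Diff_subset finite_subset)
  show km: "k \<le> card M" using cM ak m by simp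
  show "card (largest k M) = k" using largest_card[OF _ km] unfolding M_def by simp
  show LM: "largest k M \<subseteq> M" unfolding largest_def by auto
  show E: "set (cap_col n c) = A \<union> largest k M"
    unfolding cap_col_def A_def k_def M_def by (simp add: largest_def)
  show dj: "A \<inter> largest k M = {}" using LM unfolding M_def A_def by auto
  have fin: "finite (A \<union> largest k M)" using A1 LM unfolding M_def by (meson finite_Un finite_atLeastAtMost finite_subset Diff_subset)
  have "card (A \<union> largest k M) = length c"
    using card_Un_disjoint[OF _ _ dj] fin ak \<open>card (largest k M) = k\<close> by simp
  moreover have "cap_col n c = sorted_list_of_set (A \<union> largest k M)"
    unfolding cap_col_def A_def k_def M_def by (simp add: largest_def)
  ultimately show "length (cap_col n c) = length c"
    by (simp only: length_sorted_list_of_set)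
  show "sorted_wrt (<) (cap_col n c)" unfolding cap_col_def by (rule strict_sorted_list_of_set)
  show "set (cap_col n c) \<subseteq> {1..n}" using E A1 LM unfolding M_def by auto
qed


lemma col_nest:
  fixes c c' :: "nat list"
  assumes sub: "set c' \<subseteq> set c"
  shows "set (cap_col n c') \<subseteq> set (cap_col n c)"
proof -
  define M where "M = {1..n} - set c"
  define M' where "M' = {1..n} - set c'"
  define k where "k = card {x \<in> set c. n < x}"
  define k' where "k' = card {x \<in> set c'. n < x}"
  have e: "set (cap_col n c) = {x \<in> set c. x \<le> n} \<union> largest k M"
    unfolding cap_col_def k_def M_def by (simp add: largest_def)
  have e': "set (cap_col n c') = {x \<in> set c'. x \<le> n} \<union> largest k' M'"
    unfolding cap_col_def k'_def M'_def by (simp add: largest_def)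
  have kk: "k' \<le> k" unfolding k_def k'_def using sub by (intro card_mono) auto
  show ?thesis
  proof
    fix x assume "x \<in> set (cap_col n c')"
    then consider "x \<in> set c'" "x \<le> n" | "x \<in> largest k' M'" using e' by auto
    then show "x \<in> set (cap_col n c)"
    proof cases
      case 1 then show ?thesis using e sub by auto
    next
      case 2
      then have xM': "x \<in> M'" and cx: "card {y \<in> M'. x < y} < k'" unfolding largest_def by auto
      show ?thesis
      proof (cases "x \<in> set c")
        case True then show ?thesis using e xM' unfolding M'_def by auto
      next
        case False
        then have "x \<in> M" using xM' unfolding M_def M'_def by auto
        moreover have "card {y \<in> M. x < y} \<le> card {y \<in> M'. x < y}"
          using sub unfolding M_def M'_def by (intro card_mono) auto
        ultimately have "x \<in> largest k M" unfolding largest_def using cx kk by auto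
        then show ?thesis using e by auto
      qed
    qed
  qed
qed

lemma col_cnt:
  fixes c :: "nat list"
  assumes s: "sorted_wrt (<) c" and pos: "\<forall>x \<in> set c. 0 < x" and m: "length c \<le> n"
    and v1: "1 \<le> v" and vn: "v \<le> n"
  shows "card {x \<in> set (cap_col n c). x < v} \<le> j \<longleftrightarrow>
         card {x \<in> set c. x < v} \<le> j \<and> length c + v \<le> n + 1 + j"
proof -
  define A where "A = {x \<in> set c. x \<le> n}"
  define k where "k = card {x \<in> set c. n < x}"
  define M where "M = {1..n} - set c"
  define L where "L = largest k M"
  note B = col_basic[OF s pos m, folded A_def k_def M_def, folded L_def]
  define U where "U = {y \<in> M. v \<le> y}"
  define a where "a = card {x \<in> set c. x < v}"
  define b where "b = card {x \<in> set c. v \<le> x \<and> x \<le> n}"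
  have finM: "finite M" unfolding M_def by simp
  have finL: "finite L" using B(5) finM finite_subset by blast
  have A_split: "A = {x \<in> set c. x < v} \<union> {x \<in> set c. v \<le> x \<and> x \<le> n}"
    unfolding A_def using vn by auto
  have cA: "card A = a + b" unfolding A_split a_def b_def
    by (rule card_Un_disjoint) auto
  have U_eq: "U = {v..n} - {x \<in> set c. v \<le> x \<and> x \<le> n}"
    unfolding U_def M_def using v1 by auto
  have cU: "card U = (n + 1 - v) - b" unfolding U_eq b_def
    by (subst card_Diff_subset) auto
  have bb: "b \<le> n + 1 - v"
  proof -
    have "b \<le> card {v..n}" unfolding b_def by (intro card_mono) auto
    then show ?thesis by simp
  qed
  have cLv: "card {x \<in> L. x < v} = k - card U"
  proof (cases "\<exists>x \<in> L. x < v")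
    case True
    then obtain x where x: "x \<in> L" "x < v" by auto
    have UL: "U \<subseteq> L"
    proof
      fix y assume "y \<in> U"
      then have "y \<in> M" "x < y" using x unfolding U_def by auto
      moreover have "card {z \<in> M. y < z} \<le> card {z \<in> M. x < z}"
        using \<open>x < y\<close> finM by (intro card_mono) auto
      ultimately show "y \<in> L" using x unfolding L_def largest_def by auto
    qed
    have "{x \<in> L. x < v} = L - U" using B(5) unfolding U_def by auto
    then have "card {x \<in> L. x < v} = card L - card U"
      using UL finL by (simp add: card_Diff_subset finite_subset)
    then show ?thesis using B(4) by simp
  next
    case False
    then have "L \<subseteq> U" using B(5) unfolding U_def by auto
    then have "k \<le> card U" using B(4) card_mono[of U L] finM unfolding U_def by simp
    moreover have "{x \<in> L. x < v} = {}" using False by auto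
    ultimately show ?thesis by simp
  qed
  have E: "{x \<in> set (cap_col n c). x < v} = {x \<in> set c. x < v} \<union> {x \<in> L. x < v}"
    unfolding B(7) A_def using vn by auto
  have cE: "card {x \<in> set (cap_col n c). x < v} = a + (k - card U)"
  proof -
    have "card ({x \<in> set c. x < v} \<union> {x \<in> L. x < v}) = card {x \<in> set c. x < v} + card {x \<in> L. x < v}"
    proof (rule card_Un_disjoint)
      show "{x \<in> set c. x < v} \<inter> {x \<in> L. x < v} = {}" using B(8) vn unfolding A_def by auto
    qed (use finL in auto)
    then show ?thesis unfolding E a_def cLv by simp
  qed
  show ?thesis unfolding cE a_def[symmetric] cU using bb B(2) cA vn by arith
qed


lemma col_cmp:
  fixes c c' :: "nat list"
  assumes s: "sorted_wrt (<) c" and pos: "\<forall>x \<in> set c. 0 < x" and m: "length c \<le> n"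
    and s': "sorted_wrt (<) c'" and pos': "\<forall>x \<in> set c'. 0 < x" and l: "length c' = length c"
  shows "(\<forall>j < length c. c' ! j \<le> cap_col n c ! j) \<longleftrightarrow>
         (\<forall>j < length c. c' ! j \<le> c ! j) \<and> (\<forall>x \<in> set c'. x \<le> n)"
proof -
  note B = col_basic[OF s pos m]
  have se: "sorted_wrt (<) (cap_col n c)" and le: "length (cap_col n c) = length c"
    using B by auto
  have en: "cap_col n c ! j \<le> n" if "j < length c" for j
  proof -
    have "cap_col n c ! j \<in> set (cap_col n c)" using le that by simp
    then show ?thesis using B(11) by auto
  qed
  have pj: "1 \<le> c' ! j" if "j < length c" for j using pos' l that nth_mem[of j c'] by fastforce
  show ?thesis
  proof
    assume H: "\<forall>j < length c. c' ! j \<le> cap_col n c ! j"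
    have n': "\<forall>x \<in> set c'. x \<le> n"
    proof
      fix x assume "x \<in> set c'"
      then obtain j where "j < length c" "x = c' ! j" using l by (auto simp: in_set_conv_nth)
      then show "x \<le> n" using H en[of j] by fastforce
    qed
    have "c' ! j \<le> c ! j" if j: "j < length c" for j
    proof -
      have vn: "c' ! j \<le> n" using n' j l by auto
      have "card {x \<in> set (cap_col n c). x < c' ! j} \<le> j"
        using below_iff[OF se, of j "c' ! j"] H j le by auto
      then have "card {x \<in> set c. x < c' ! j} \<le> j"
        using col_cnt[OF s pos m pj[OF j] vn] by auto
      then show ?thesis using below_iff[OF s j] by auto
    qed
    then show "(\<forall>j < length c. c' ! j \<le> c ! j) \<and> (\<forall>x \<in> set c'. x \<le> n)" using n' by auto
  next
    assume H: "(\<forall>j < length c. c' ! j \<le> c ! j) \<and> (\<forall>x \<in> set c'. x \<le> n)"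
    show "\<forall>j < length c. c' ! j \<le> cap_col n c ! j"
    proof (intro allI impI)
      fix j assume j: "j < length c"
      have vn: "c' ! j \<le> n" using H j l by auto
      have last: "c' ! (length c - 1) \<le> n" using H j l by auto
      have "c' ! j + (length c - 1 - j) \<le> c' ! (length c - 1)"
        using sorted_gap[OF s', of j "length c - 1"] j l by auto
      then have g: "length c + c' ! j \<le> n + 1 + j" using last j by linarith
      have "card {x \<in> set c. x < c' ! j} \<le> j" using below_iff[OF s j] H j by auto
      then have "card {x \<in> set (cap_col n c). x < c' ! j} \<le> j"
        using col_cnt[OF s pos m pj[OF j] vn] g by auto
      then show "c' ! j \<le> cap_col n c ! j" using below_iff[OF se, of j] j le by auto
    qed
  qed
qed

lemma col_len:
  assumes "is_key T" "num_rows T \<le> n" "c \<in> set T"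
  shows "length c \<le> n"
proof -
  obtain i where i: "i < length T" "c = T ! i" using assms(3) by (auto simp: in_set_conv_nth)
  have ne: "T \<noteq> []" using assms(3) by auto
  have h: "num_rows T = length (T ! 0)" using ne by (simp add: num_rows_def hd_conv_nth)
  have so: "sorted_wrt (\<ge>) (shape T)" using assms(1) by (simp add: is_key_def is_tableau_def)
  have "length (T ! i) \<le> length (T ! 0)"
  proof (cases "i = 0")
    case False
    then have "0 < length T" using i(1) by arith
    then show ?thesis using sorted_wrt_nth_less[OF so, of 0 i] i False ne by (simp add: shape_def)
  qed simp
  then show ?thesis using h i assms(2) by simp
qed

theorem lemma3p2:
  fixes T :: tableau and n :: nat
  assumes "is_key T" and "num_rows T \<le> n"
  shows "is_key (cap n T) \<and>
    (\<forall>T'. is_key T' \<and> shape T' = shape T \<longrightarrow>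
       (tab_le T' (cap n T) \<longleftrightarrow> tab_le T' T \<and> max_entry_le T' n))"
proof -
  have sT: "\<And>c. c \<in> set T \<Longrightarrow> sorted_wrt (<) c" using assms(1) by (simp add: is_key_def)
  have pT: "\<And>c. c \<in> set T \<Longrightarrow> \<forall>x \<in> set c. 0 < x" using assms(1) by (simp add: is_key_def is_tableau_def)
  have neT: "\<And>c. c \<in> set T \<Longrightarrow> c \<noteq> []" using assms(1) by (simp add: is_key_def is_tableau_def)
  have lT: "\<And>c. c \<in> set T \<Longrightarrow> length c \<le> n" using col_len[OF assms] .
  have shc: "shape (cap n T) = shape T"
    unfolding shape_def cap_def using col_basic(9)[OF sT pT lT] by simp
  have key: "is_key (cap n T)"
  proof -
    have a: "col \<noteq> [] \<and> (\<forall>x \<in> set col. 0 < x) \<and> sorted_wrt (<) col" if hc: "col \<in> set (cap n T)" for col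
    proof -
      obtain c where c: "c \<in> set T" "col = cap_col n c" using hc by (auto simp: cap_def)
      note B = col_basic[OF sT[OF c(1)] pT[OF c(1)] lT[OF c(1)]]
      have "col \<noteq> []" using B(9) neT[OF c(1)] c(2) by auto
      moreover have "\<forall>x \<in> set col. 0 < x" using B(11) c(2) by auto
      moreover have "sorted_wrt (<) col" using B(10) c(2) by auto
      ultimately show ?thesis by blast
    qed
    have b: "sorted_wrt (\<ge>) (shape (cap n T))" using shc assms(1) by (simp add: is_key_def is_tableau_def)
    have c: "set (cap n T ! Suc i) \<subseteq> set (cap n T ! i)" if i: "Suc i < length (cap n T)" for i
    proof -
      have "set (T ! Suc i) \<subseteq> set (T ! i)" using assms(1) i by (simp add: is_key_def cap_def)
      then show ?thesis using col_nest i by (simp add: cap_def)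
    qed
    show ?thesis unfolding is_key_def is_tableau_def using a b c by blast
  qed
  have cmp: "tab_le T' (cap n T) \<longleftrightarrow> tab_le T' T \<and> max_entry_le T' n"
    if T': "is_key T'" "shape T' = shape T" for T'
  proof -
    have len: "length T' = length T" using T'(2) unfolding shape_def by (metis length_map)
    have leni: "length (T' ! i) = length (T ! i)" if "i < length T" for i
      using T'(2) that len unfolding shape_def by (metis nth_map)
    have per: "(\<forall>j < length (T' ! i). T' ! i ! j \<le> cap n T ! i ! j) \<longleftrightarrow>
         (\<forall>j < length (T' ! i). T' ! i ! j \<le> T ! i ! j) \<and> (\<forall>x \<in> set (T' ! i). x \<le> n)"
      if i: "i < length T" for i
    proof -
      have ci: "T ! i \<in> set T" using i by simp
      have c'i: "T' ! i \<in> set T'" using i len by simp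
      have "sorted_wrt (<) (T' ! i)" "\<forall>x \<in> set (T' ! i). 0 < x"
        using T'(1) c'i by (auto simp: is_key_def is_tableau_def)
      from col_cmp[OF sT[OF ci] pT[OF ci] lT[OF ci] this leni[OF i]]
      show ?thesis using i leni[OF i] by (simp add: cap_def)
    qed
    have mx: "max_entry_le T' n \<longleftrightarrow> (\<forall>i < length T. \<forall>x \<in> set (T' ! i). x \<le> n)"
      unfolding max_entry_le_def using len by (metis in_set_conv_nth)
    show ?thesis
      unfolding tab_le_def mx using per shc T'(2) len by auto
  qed
  show ?thesis using key cmp by blast
qed

end
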